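(* There is an absolute constant $d$ such that for every finite simple digraph $H$, every positive integer $k$, and every tournament $T$ that does not contain $k$ pairwise vertex-disjoint topological minor copies of $H$, we have $\mathrm{pw}(T)\le d\,\|H\|\,k$.
   Context: All digraphs are finite and simple; $\|H\|:=|V(H)|+|A(H)|$. A tournament is a simple digraph with exactly one arc between every pair of distinct vertices. A topological minor copy of $H$ in $T$ is a subgraph $\widehat H$ of $T$ together with a map sending vertices of $H$ to distinct vertices of $\widehat H$ and arcs $(u,v)$ of $H$ to directed paths from the image of $u$ to the image of $v$ that are internally vertex-disjoint, avoid images of vertices of $H$ in their interiors, and together cover all arcs and all non-image vertices of $\widehat H$ exactly once. An interval decomposition of a tournament $T$ is a map $I$ assigning to each vertex a nonempty closed interval $[\alpha,\beta]$ with integer endpoints, such that whenever $\max I(u)<\min I(v)$, the arc between $u$ and $v$ is $(u,v)$. Its width is $\max_{\alpha\in\mathbb{Z}}|\{v: \alpha\in I(v)\}|$, and the pathwidth $\mathrm{pw}(T)$ is the minimum width of an interval decomposition of $T$. *)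

theory Defs
  imports Complex_Main
begin

definition simple_digraph :: "'a set \<Rightarrow> ('a \<times> 'a) set \<Rightarrow> bool" where
  "simple_digraph V A \<longleftrightarrow> finite V \<and> A \<subseteq> V \<times> V \<and> (\<forall>x. (x, x) \<notin> A)"

definition tournament :: "'a set \<Rightarrow> ('a \<times> 'a) set \<Rightarrow> bool" where
  "tournament V A \<longleftrightarrow> simple_digraph V A \<and>
     (\<forall>x\<in>V. \<forall>y\<in>V. x \<noteq> y \<longrightarrow> ((x, y) \<in> A \<longleftrightarrow> (y, x) \<notin> A))"

definition dipath :: "('a \<times> 'a) set \<Rightarrow> 'a list \<Rightarrow> bool" where
  "dipath A p \<longleftrightarrow> distinct p \<and> 2 \<le> length p \<and>
     (\<forall>i. Suc i < length p \<longrightarrow> (p ! i, p ! Suc i) \<in> A)"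

definition interior :: "'a list \<Rightarrow> 'a set" where
  "interior p = set (butlast (tl p))"

definition top_minor_copy ::
  "'b set \<Rightarrow> ('b \<times> 'b) set \<Rightarrow> 'a set \<Rightarrow> ('a \<times> 'a) set \<Rightarrow> ('b \<Rightarrow> 'a) \<Rightarrow> ('b \<times> 'b \<Rightarrow> 'a list) \<Rightarrow> bool" where
  "top_minor_copy VH AH V A f P \<longleftrightarrow>
     inj_on f VH \<and> f ` VH \<subseteq> V \<and>
     (\<forall>e\<in>AH. dipath A (P e) \<and> set (P e) \<subseteq> V \<and>
        hd (P e) = f (fst e) \<and> last (P e) = f (snd e) \<and> interior (P e) \<inter> f ` VH = {}) \<and>
     (\<forall>e\<in>AH. \<forall>e'\<in>AH. e \<noteq> e' \<longrightarrow> interior (P e) \<inter> interior (P e') = {})"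

definition copy_verts :: "'b set \<Rightarrow> ('b \<times> 'b) set \<Rightarrow> ('b \<Rightarrow> 'a) \<Rightarrow> ('b \<times> 'b \<Rightarrow> 'a list) \<Rightarrow> 'a set" where
  "copy_verts VH AH f P = f ` VH \<union> (\<Union>e\<in>AH. set (P e))"

definition has_k_disjoint_copies ::
  "'b set \<Rightarrow> ('b \<times> 'b) set \<Rightarrow> nat \<Rightarrow> 'a set \<Rightarrow> ('a \<times> 'a) set \<Rightarrow> bool" where
  "has_k_disjoint_copies VH AH k V A \<longleftrightarrow>
     (\<exists>(f :: nat \<Rightarrow> 'b \<Rightarrow> 'a) (P :: nat \<Rightarrow> 'b \<times> 'b \<Rightarrow> 'a list).
        (\<forall>i<k. top_minor_copy VH AH V A (f i) (P i)) \<and>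
        (\<forall>i<k. \<forall>j<k. i \<noteq> j \<longrightarrow> copy_verts VH AH (f i) (P i) \<inter> copy_verts VH AH (f j) (P j) = {}))"

text \<open>Interval decompositions: I v = (alpha, beta) encodes the closed integer interval.\<close>
definition interval_decomp :: "'a set \<Rightarrow> ('a \<times> 'a) set \<Rightarrow> ('a \<Rightarrow> int \<times> int) \<Rightarrow> bool" where
  "interval_decomp V A I \<longleftrightarrow>
     (\<forall>v\<in>V. fst (I v) \<le> snd (I v)) \<and>
     (\<forall>u\<in>V. \<forall>v\<in>V. snd (I u) < fst (I v) \<longrightarrow> (u, v) \<in> A)"

definition decomp_width :: "'a set \<Rightarrow> ('a \<Rightarrow> int \<times> int) \<Rightarrow> nat" where
  "decomp_width V I = Max ((\<lambda>\<alpha>. card {v\<in>V. fst (I v) \<le> \<alpha> \<and> \<alpha> \<le> snd (I v)}) ` UNIV)"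

definition pathwidth :: "'a set \<Rightarrow> ('a \<times> 'a) set \<Rightarrow> nat" where
  "pathwidth V A = Min {decomp_width V I | I. interval_decomp V A I}"

end

theory Submission
  imports Defs
begin



locale tourn =
  fixes V :: "'a set" and A :: "('a \<times> 'a) set"
  assumes tour: "tournament V A"
begin

lemma sd: "simple_digraph V A"
  using tour unfolding tournament_def by blast

lemma finV: "finite V"
  using sd unfolding simple_digraph_def by blast

lemma AV: "(x,y) \<in> A \<Longrightarrow> x \<in> V \<and> y \<in> V"
  using sd unfolding simple_digraph_def by blast

lemma noloop: "(x,x) \<notin> A"
  using sd unfolding simple_digraph_def by blast

lemma tot: "x \<in> V \<Longrightarrow> y \<in> V \<Longrightarrow> x \<noteq> y \<Longrightarrow> (x,y) \<in> A \<longleftrightarrow> (y,x) \<notin> A"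
  using tour unfolding tournament_def by blast

lemma antisym: "(x,y) \<in> A \<Longrightarrow> (y,x) \<notin> A"
proof -
  assume a: "(x,y) \<in> A"
  have "x \<noteq> y" using a noloop by auto
  thus ?thesis using tot[of x y] AV[OF a] a by blast
qed

lemma tot2: "x \<in> V \<Longrightarrow> y \<in> V \<Longrightarrow> x \<noteq> y \<Longrightarrow> (x,y) \<notin> A \<Longrightarrow> (y,x) \<in> A"
  using tot by blast

definition outs :: "'a \<Rightarrow> 'a set" where "outs x = {y\<in>V. (x,y)\<in>A}"
definition ins :: "'a \<Rightarrow> 'a set" where "ins x = {y\<in>V. (y,x)\<in>A}"
definition sc :: "'a \<Rightarrow> nat" where "sc x = card (outs x)"

lemma outs_ins_split: "x \<in> V \<Longrightarrow> outs x \<union> ins x = V - {x} \<and> outs x \<inter> ins x = {}"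
  unfolding outs_def ins_def using tot2[of x] noloop antisym by auto

lemma card_ins: "x \<in> V \<Longrightarrow> card (ins x) + sc x + 1 = card V"
proof -
  assume x: "x \<in> V"
  have "card (outs x \<union> ins x) = card (V - {x})" using outs_ins_split[OF x] by simp
  moreover have "card (outs x \<union> ins x) = card (outs x) + card (ins x)"
    using outs_ins_split[OF x] finV by (intro card_Un_disjoint) (auto simp: outs_def ins_def)
  moreover have "card (V - {x}) + 1 = card V" using x finV
    by (simp add: card_Diff_singleton) (metis Suc_pred card_gt_0_iff emptyE)
  ultimately show ?thesis unfolding sc_def by simp
qed

lemma sc_less: "x \<in> V \<Longrightarrow> sc x < card V"
  using card_ins by fastforce

lemma sum_out_in:
  assumes S: "S \<subseteq> V"
  shows "(\<Sum>z\<in>S. card {w\<in>S. (z,w)\<in>A}) = (\<Sum>z\<in>S. card {w\<in>S. (w,z)\<in>A})"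
proof -
  have fS: "finite S" using S finV finite_subset by auto
  have "(\<Sum>z\<in>S. card {w\<in>S. (z,w)\<in>A}) = card (SIGMA z:S. {w\<in>S. (z,w)\<in>A})"
    using fS by (simp add: card_SigmaI)
  also have "(SIGMA z:S. {w\<in>S. (z,w)\<in>A}) = A \<inter> (S \<times> S)" by auto
  also have "card (A \<inter> (S \<times> S)) = card ((\<lambda>(a,b). (b,a)) ` (A \<inter> (S \<times> S)))"
    by (rule card_image[symmetric]) (auto simp: inj_on_def)
  also have "(\<lambda>(a,b). (b,a)) ` (A \<inter> (S \<times> S)) = (SIGMA z:S. {w\<in>S. (w,z)\<in>A})"
  proof (rule set_eqI)
    fix p :: "'a \<times> 'a"
    obtain a b where p: "p = (a,b)" by (cases p)
    have "(a,b) \<in> (\<lambda>(a,b). (b,a)) ` (A \<inter> (S \<times> S)) \<longleftrightarrow> (b,a) \<in> A \<inter> (S \<times> S)"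
    proof
      assume "(a,b) \<in> (\<lambda>(a,b). (b,a)) ` (A \<inter> (S \<times> S))"
      then obtain q where q: "q \<in> A \<inter> (S \<times> S)" "(a,b) = (\<lambda>(a,b). (b,a)) q" by blast
      thus "(b,a) \<in> A \<inter> (S \<times> S)" by (cases q) auto
    next
      assume "(b,a) \<in> A \<inter> (S \<times> S)"
      thus "(a,b) \<in> (\<lambda>(a,b). (b,a)) ` (A \<inter> (S \<times> S))" by (rule rev_image_eqI) simp
    qed
    thus "p \<in> (\<lambda>(a,b). (b,a)) ` (A \<inter> (S \<times> S)) \<longleftrightarrow> p \<in> (SIGMA z:S. {w\<in>S. (w,z)\<in>A})"
      using p by auto
  qed
  also have "card (SIGMA z:S. {w\<in>S. (w,z)\<in>A}) = (\<Sum>z\<in>S. card {w\<in>S. (w,z)\<in>A})"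
    using fS by (simp add: card_SigmaI)
  finally show ?thesis .
qed

lemma sum_out_twice:
  assumes S: "S \<subseteq> V"
  shows "2 * (\<Sum>z\<in>S. card {w\<in>S. (z,w)\<in>A}) = card S * (card S - 1)"
proof -
  have fS: "finite S" using S finV finite_subset by auto
  have each: "card {w\<in>S. (z,w)\<in>A} + card {w\<in>S. (w,z)\<in>A} = card S - 1" if z: "z \<in> S" for z
  proof -
    have "{w\<in>S. (z,w)\<in>A} \<union> {w\<in>S. (w,z)\<in>A} = S - {z}"
    proof (rule set_eqI)
      fix w show "w \<in> {w\<in>S. (z,w)\<in>A} \<union> {w\<in>S. (w,z)\<in>A} \<longleftrightarrow> w \<in> S - {z}"
        using z S noloop tot2[of z w] by auto
    qed
    moreover have "{w\<in>S. (z,w)\<in>A} \<inter> {w\<in>S. (w,z)\<in>A} = {}" using antisym by auto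
    ultimately have "card {w\<in>S. (z,w)\<in>A} + card {w\<in>S. (w,z)\<in>A} = card (S - {z})"
      using fS by (simp add: card_Un_disjoint[symmetric])
    thus ?thesis using z fS by simp
  qed
  have "2 * (\<Sum>z\<in>S. card {w\<in>S. (z,w)\<in>A}) =
        (\<Sum>z\<in>S. card {w\<in>S. (z,w)\<in>A}) + (\<Sum>z\<in>S. card {w\<in>S. (w,z)\<in>A})"
    using sum_out_in[OF S] by simp
  also have "\<dots> = (\<Sum>z\<in>S. card {w\<in>S. (z,w)\<in>A} + card {w\<in>S. (w,z)\<in>A})"
    by (simp add: sum.distrib)
  also have "\<dots> = (\<Sum>z\<in>S. card S - 1)" using each by simp
  finally show ?thesis by simp
qed

lemma exists_big_gen:
  assumes fS: "finite S" and ne: "S \<noteq> {}"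
    and sm: "2 * (\<Sum>z\<in>S. (g z::nat)) = card S * (card S - 1)"
  shows "\<exists>z\<in>S. card S \<le> 2 * g z + 1"
proof (rule ccontr)
  assume H: "\<not> ?thesis"
  have lt: "2 * g z \<le> card S - 2" if z: "z \<in> S" for z
  proof -
    have "\<not> card S \<le> 2 * g z + 1" using H z by blast
    thus ?thesis by linarith
  qed
  obtain z0 where z0: "z0 \<in> S" using ne by blast
  have "\<not> card S \<le> 2 * g z0 + 1" using H z0 by blast
  hence c2: "2 \<le> card S" by linarith
  have "(\<Sum>z\<in>S. 2 * g z) \<le> (\<Sum>z\<in>S. card S - 2)"
    by (rule sum_mono) (rule lt)
  hence "2 * (\<Sum>z\<in>S. g z) \<le> card S * (card S - 2)"
    by (simp add: sum_distrib_left)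
  hence "card S * (card S - 1) \<le> card S * (card S - 2)" using sm by simp
  moreover have "card S * (card S - 2) < card S * (card S - 1)"
    using c2 by (intro mult_strict_left_mono) auto
  ultimately show False by simp
qed

lemma exists_big_out:
  assumes S: "S \<subseteq> V" and ne: "S \<noteq> {}"
  shows "\<exists>z\<in>S. card S \<le> 2 * card {w\<in>S. (z,w)\<in>A} + 1"
  using exists_big_gen[OF finite_subset[OF S finV] ne sum_out_twice[OF S]] .

lemma exists_big_in:
  assumes S: "S \<subseteq> V" and ne: "S \<noteq> {}"
  shows "\<exists>z\<in>S. card S \<le> 2 * card {w\<in>S. (w,z)\<in>A} + 1"
proof -
  have "2 * (\<Sum>z\<in>S. card {w\<in>S. (w,z)\<in>A}) = card S * (card S - 1)"
    using sum_out_twice[OF S] sum_out_in[OF S] by simp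
  thus ?thesis using exists_big_gen[OF finite_subset[OF S finV] ne] by blast
qed

lemma two_paths:
  assumes x: "x \<in> V" and u: "u \<in> V" and xu: "x \<noteq> u"
  shows "sc x \<le> card {w\<in>V. (x,w)\<in>A \<and> (w,u)\<in>A} + sc u + 1"
proof -
  have "outs x \<subseteq> {w\<in>V. (x,w)\<in>A \<and> (w,u)\<in>A} \<union> outs u \<union> {u}"
    unfolding outs_def using noloop tot2 u by blast
  hence "card (outs x) \<le> card ({w\<in>V. (x,w)\<in>A \<and> (w,u)\<in>A} \<union> outs u \<union> {u})"
    using finV by (intro card_mono) (auto simp: outs_def)
  also have "\<dots> \<le> card {w\<in>V. (x,w)\<in>A \<and> (w,u)\<in>A} + card (outs u) + card {u}"
    using card_Un_le[of "{w\<in>V. (x,w)\<in>A \<and> (w,u)\<in>A} \<union> outs u" "{u}"]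
      card_Un_le[of "{w\<in>V. (x,w)\<in>A \<and> (w,u)\<in>A}" "outs u"] by linarith
  finally show ?thesis unfolding sc_def by simp
qed

end



definition linked :: "'a set \<Rightarrow> ('a \<times> 'a) set \<Rightarrow> 'a set \<Rightarrow> nat \<Rightarrow> bool" where
  "linked V A J N \<longleftrightarrow> (\<forall>x\<in>J. \<forall>y\<in>J. x \<noteq> y \<longrightarrow> (\<forall>U. finite U \<longrightarrow> card U \<le> N \<longrightarrow>
     (\<exists>p. dipath A p \<and> hd p = x \<and> last p = y \<and> set p \<subseteq> V \<and> length p \<le> 5 \<and> interior p \<inter> U = {})))"

lemma interior_card: "length p \<le> 5 \<Longrightarrow> card (interior p) \<le> 3"
proof -
  assume "length p \<le> 5"
  hence "length (butlast (tl p)) \<le> 3" by simp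
  thus ?thesis unfolding interior_def using card_length order_trans by blast
qed

lemma set_path: "2 \<le> length p \<Longrightarrow> set p = {hd p, last p} \<union> interior p"
proof -
  assume l: "2 \<le> length p"
  obtain a q where p: "p = a # q" using l by (cases p) auto
  have q: "q \<noteq> []" using l p by auto
  have "q = butlast q @ [last q]" using q by simp
  hence "set q = set (butlast q) \<union> {last q}" by (metis set_append empty_set list.set(2) Un_empty_right)
  thus ?thesis unfolding interior_def using p q by auto
qed

lemma route:
  assumes lk: "linked V A J N" and fD: "finite D"
    and sd: "\<forall>d\<in>D. src d \<in> J \<and> dst d \<in> J \<and> src d \<noteq> dst d"
    and fU: "finite U0" and cU: "card U0 + 3 * card D \<le> N"
  shows "\<exists>ps. \<forall>d\<in>D. dipath A (ps d) \<and> hd (ps d) = src d \<and> last (ps d) = dst d \<and>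
           set (ps d) \<subseteq> V \<and> length (ps d) \<le> 5 \<and> interior (ps d) \<inter> U0 = {} \<and>
           (\<forall>d'\<in>D. d \<noteq> d' \<longrightarrow> interior (ps d) \<inter> interior (ps d') = {})"
  using fD sd cU
proof (induction D rule: finite_induct)
  case empty
  then show ?case by simp
next
  case (insert d D)
  have cD: "card U0 + 3 * card D \<le> N" using insert.prems(2) insert.hyps by simp
  have "\<exists>ps. \<forall>d\<in>D. dipath A (ps d) \<and> hd (ps d) = src d \<and> last (ps d) = dst d \<and>
           set (ps d) \<subseteq> V \<and> length (ps d) \<le> 5 \<and> interior (ps d) \<inter> U0 = {} \<and>
           (\<forall>d'\<in>D. d \<noteq> d' \<longrightarrow> interior (ps d) \<inter> interior (ps d') = {})"
    by (rule insert.IH[OF _ cD]) (use insert.prems(1) in simp)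
  then obtain ps where ps: "\<forall>d\<in>D. dipath A (ps d) \<and> hd (ps d) = src d \<and> last (ps d) = dst d \<and>
           set (ps d) \<subseteq> V \<and> length (ps d) \<le> 5 \<and> interior (ps d) \<inter> U0 = {} \<and>
           (\<forall>d'\<in>D. d \<noteq> d' \<longrightarrow> interior (ps d) \<inter> interior (ps d') = {})" by blast
  define U where "U = U0 \<union> (\<Union>d'\<in>D. interior (ps d'))"
  have fU': "finite U" unfolding U_def using fU insert.hyps(1) by (simp add: interior_def)
  have "card (\<Union>d'\<in>D. interior (ps d')) \<le> (\<Sum>d'\<in>D. card (interior (ps d')))"
    by (rule card_UN_le[OF insert.hyps(1)])
  also have "\<dots> \<le> (\<Sum>d'\<in>D. 3)"
  proof (rule sum_mono)
    fix d' assume "d' \<in> D"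
    hence "length (ps d') \<le> 5" using ps by blast
    thus "card (interior (ps d')) \<le> 3" by (rule interior_card)
  qed
  also have "\<dots> = 3 * card D" by simp
  finally have cI: "card (\<Union>d'\<in>D. interior (ps d')) \<le> 3 * card D" .
  have "card U \<le> card U0 + card (\<Union>d'\<in>D. interior (ps d'))"
    unfolding U_def by (rule card_Un_le)
  hence cU': "card U \<le> N" using cI cD by linarith
  have sdd: "src d \<in> J" "dst d \<in> J" "src d \<noteq> dst d" using insert.prems(1) by auto
  obtain p where p: "dipath A p" "hd p = src d" "last p = dst d" "set p \<subseteq> V" "length p \<le> 5"
      "interior p \<inter> U = {}"
  proof -
    have "\<forall>U. finite U \<longrightarrow> card U \<le> N \<longrightarrow>
     (\<exists>p. dipath A p \<and> hd p = src d \<and> last p = dst d \<and> set p \<subseteq> V \<and> length p \<le> 5 \<and> interior p \<inter> U = {})"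
      using lk sdd unfolding linked_def by blast
    hence "\<exists>p. dipath A p \<and> hd p = src d \<and> last p = dst d \<and> set p \<subseteq> V \<and> length p \<le> 5 \<and> interior p \<inter> U = {}"
      using fU' cU' by blast
    thus ?thesis using that by blast
  qed
  have inU: "interior (ps d') \<subseteq> U" if "d' \<in> D" for d'
    unfolding U_def using that by blast
  have pU0: "interior p \<inter> U0 = {}" using p(6) unfolding U_def by blast
  define ps' where "ps' = ps(d := p)"
  have psd: "ps' d = p" unfolding ps'_def by simp
  have psD: "ps' d' = ps d'" if "d' \<in> D" for d'
    unfolding ps'_def using that insert.hyps(2) by auto
  have disj: "interior (ps' a) \<inter> interior (ps' b) = {}"
    if a: "a \<in> insert d D" and b: "b \<in> insert d D" and ab: "a \<noteq> b" for a b
  proof (cases "a = d")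
    case True
    hence bD: "b \<in> D" using b ab by auto
    show ?thesis using True psd psD[OF bD] inU[OF bD] p(6) by auto
  next
    case False
    hence aD: "a \<in> D" using a by auto
    show ?thesis
    proof (cases "b = d")
      case True
      show ?thesis using True psd psD[OF aD] inU[OF aD] p(6) by auto
    next
      case False
      hence bD: "b \<in> D" using b by auto
      have "interior (ps a) \<inter> interior (ps b) = {}" using ps aD bD ab by blast
      thus ?thesis using psD[OF aD] psD[OF bD] by simp
    qed
  qed
  have good: "dipath A (ps' d'') \<and> hd (ps' d'') = src d'' \<and> last (ps' d'') = dst d'' \<and>
           set (ps' d'') \<subseteq> V \<and> length (ps' d'') \<le> 5 \<and> interior (ps' d'') \<inter> U0 = {}"
    if d'': "d'' \<in> insert d D" for d''
  proof (cases "d'' = d")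
    case True
    then show ?thesis using p pU0 psd by simp
  next
    case False
    hence dD: "d'' \<in> D" using d'' by simp
    then show ?thesis using ps psD[OF dD] by simp
  qed
  show ?case
  proof (rule exI[of _ ps'], rule ballI)
    fix d'' assume d'': "d'' \<in> insert d D"
    have "\<forall>d'\<in>insert d D. d'' \<noteq> d' \<longrightarrow> interior (ps' d'') \<inter> interior (ps' d') = {}"
      using disj[OF d''] by blast
    thus "dipath A (ps' d'') \<and> hd (ps' d'') = src d'' \<and> last (ps' d'') = dst d'' \<and>
           set (ps' d'') \<subseteq> V \<and> length (ps' d'') \<le> 5 \<and> interior (ps' d'') \<inter> U0 = {} \<and>
           (\<forall>d'\<in>insert d D. d'' \<noteq> d' \<longrightarrow> interior (ps' d'') \<inter> interior (ps' d') = {})"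
      using good[OF d''] by simp
  qed
qed




lemma copies_from_linked:
  fixes VH :: "'b set" and AH :: "('b \<times> 'b) set" and V :: "'a set"
  assumes sH: "simple_digraph VH AH" and lk: "linked V A J N" and JV: "J \<subseteq> V" and fV: "finite V"
    and cJ: "k * card VH \<le> card J" and cN: "3 * k * (card VH + card AH) \<le> N"
  shows "has_k_disjoint_copies VH AH k V A"
proof -
  have fVH: "finite VH" and AHs: "AH \<subseteq> VH \<times> VH" and nl: "\<And>x. (x,x) \<notin> AH"
    using sH unfolding simple_digraph_def by auto
  have fAH: "finite AH" using fVH AHs finite_subset by blast
  have fJ: "finite J" using JV fV finite_subset by blast
  define I where "I = {0..<k} \<times> VH"
  have fI: "finite I" unfolding I_def using fVH by simp
  have cI: "card I = k * card VH" unfolding I_def by (simp add: card_cartesian_product)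
  obtain g where gJ: "g ` I \<subseteq> J" and gi: "inj_on g I"
    using card_le_inj[OF fI fJ] cJ cI by auto
  define D where "D = {0..<k} \<times> AH"
  have fD: "finite D" unfolding D_def using fAH by simp
  have cD: "card D = k * card AH" unfolding D_def by (simp add: card_cartesian_product)
  define src where "src = (\<lambda>(i::nat, e::'b \<times> 'b). g (i, fst e))"
  define dst where "dst = (\<lambda>(i::nat, e::'b \<times> 'b). g (i, snd e))"
  define U0 where "U0 = g ` I"
  have fU0: "finite U0" unfolding U0_def using fI by simp
  have cU0: "card U0 = k * card VH" unfolding U0_def using card_image[OF gi] cI by simp
  have sdD: "\<forall>d\<in>D. src d \<in> J \<and> dst d \<in> J \<and> src d \<noteq> dst d"
  proof
    fix d assume d: "d \<in> D"
    then obtain i e where de: "d = (i,e)" and i: "i < k" and e: "e \<in> AH" unfolding D_def by auto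
    have m1: "(i, fst e) \<in> I" and m2: "(i, snd e) \<in> I" using i e AHs unfolding I_def by auto
    have ne: "fst e \<noteq> snd e" using nl e by (cases e) auto
    have "g (i, fst e) \<noteq> g (i, snd e)"
      using inj_onD[OF gi _ m1 m2] ne by auto
    thus "src d \<in> J \<and> dst d \<in> J \<and> src d \<noteq> dst d"
      using gJ m1 m2 de unfolding src_def dst_def by auto
  qed
  have cc: "card U0 + 3 * card D \<le> N" using cU0 cD cN by (simp add: algebra_simps)
  obtain ps where ps: "\<forall>d\<in>D. dipath A (ps d) \<and> hd (ps d) = src d \<and> last (ps d) = dst d \<and>
           set (ps d) \<subseteq> V \<and> length (ps d) \<le> 5 \<and> interior (ps d) \<inter> U0 = {} \<and>
           (\<forall>d'\<in>D. d \<noteq> d' \<longrightarrow> interior (ps d) \<inter> interior (ps d') = {})"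
    using route[OF lk fD sdD fU0 cc] by blast
  define f where "f = (\<lambda>(i::nat) (h::'b). g (i, h))"
  define P where "P = (\<lambda>(i::nat) (e::'b \<times> 'b). ps (i, e))"
  have copy: "top_minor_copy VH AH V A (f i) (P i)" if i: "i < k" for i
    unfolding top_minor_copy_def
  proof (intro conjI ballI impI)
    show "inj_on (f i) VH"
      using gi i unfolding inj_on_def f_def I_def by auto
    show "f i ` VH \<subseteq> V"
    proof
      fix v assume "v \<in> f i ` VH"
      then obtain h where h: "h \<in> VH" and v: "v = g (i,h)" unfolding f_def by auto
      have "(i,h) \<in> I" unfolding I_def using i h by auto
      thus "v \<in> V" using gJ JV v by blast
    qed
    fix e assume e: "e \<in> AH"
    have dD: "(i,e) \<in> D" unfolding D_def using i e by auto
    note pe = ps[rule_format, OF dD]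
    show "dipath A (P i e)" using pe unfolding P_def by simp
    show "set (P i e) \<subseteq> V" using pe unfolding P_def by simp
    show "hd (P i e) = f i (fst e)" using pe unfolding P_def src_def f_def by simp
    show "last (P i e) = f i (snd e)" using pe unfolding P_def dst_def f_def by simp
    have "f i ` VH \<subseteq> U0" unfolding U0_def I_def f_def using i by auto
    thus "interior (P i e) \<inter> f i ` VH = {}" using pe unfolding P_def by blast
  next
    fix e e' assume e: "e \<in> AH" and e': "e' \<in> AH" and ee: "e \<noteq> e'"
    have dD: "(i,e) \<in> D" "(i,e') \<in> D" unfolding D_def using i e e' by auto
    thus "interior (P i e) \<inter> interior (P i e') = {}"
      using ps ee unfolding P_def by blast
  qed
  have cv: "copy_verts VH AH (f i) (P i) \<subseteq> g ` ({i} \<times> VH) \<union> (\<Union>e\<in>AH. interior (ps (i,e)))"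
    if i: "i < k" for i
  proof
    fix v assume "v \<in> copy_verts VH AH (f i) (P i)"
    hence "v \<in> f i ` VH \<or> (\<exists>e\<in>AH. v \<in> set (P i e))" unfolding copy_verts_def by blast
    thus "v \<in> g ` ({i} \<times> VH) \<union> (\<Union>e\<in>AH. interior (ps (i,e)))"
    proof
      assume "v \<in> f i ` VH" thus ?thesis unfolding f_def by auto
    next
      assume "\<exists>e\<in>AH. v \<in> set (P i e)"
      then obtain e where e: "e \<in> AH" and v: "v \<in> set (ps (i,e))" unfolding P_def by auto
      have dD: "(i,e) \<in> D" unfolding D_def using i e by auto
      note pe = ps[rule_format, OF dD]
      have "2 \<le> length (ps (i,e))" using pe unfolding dipath_def by simp
      hence "set (ps (i,e)) = {hd (ps (i,e)), last (ps (i,e))} \<union> interior (ps (i,e))"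
        by (rule set_path)
      moreover have "hd (ps (i,e)) = g (i, fst e)" "last (ps (i,e)) = g (i, snd e)"
        using pe unfolding src_def dst_def by auto
      moreover have "fst e \<in> VH" "snd e \<in> VH" using e AHs by auto
      ultimately show ?thesis using v e by auto
    qed
  qed
  have disj: "copy_verts VH AH (f i) (P i) \<inter> copy_verts VH AH (f j) (P j) = {}"
    if i: "i < k" and j: "j < k" and ij: "i \<noteq> j" for i j
  proof -
    have a1: "g ` ({i} \<times> VH) \<inter> g ` ({j} \<times> VH) = {}"
    proof -
      have "g ` ({i} \<times> VH) \<inter> g ` ({j} \<times> VH) = g ` ({i} \<times> VH \<inter> {j} \<times> VH)"
        by (rule inj_on_image_Int[OF gi, symmetric]) (use i j in \<open>auto simp: I_def\<close>)
      thus ?thesis using ij by auto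
    qed
    have a2: "g ` ({i} \<times> VH) \<inter> interior (ps (j,e)) = {}" if e: "e \<in> AH" for e
    proof -
      have dD: "(j,e) \<in> D" unfolding D_def using j e by auto
      have "g ` ({i} \<times> VH) \<subseteq> U0" unfolding U0_def I_def using i by auto
      thus ?thesis using ps dD by blast
    qed
    have a3: "g ` ({j} \<times> VH) \<inter> interior (ps (i,e)) = {}" if e: "e \<in> AH" for e
    proof -
      have dD: "(i,e) \<in> D" unfolding D_def using i e by auto
      have "g ` ({j} \<times> VH) \<subseteq> U0" unfolding U0_def I_def using j by auto
      thus ?thesis using ps dD by blast
    qed
    have a4: "interior (ps (i,e)) \<inter> interior (ps (j,e')) = {}" if e: "e \<in> AH" and e': "e' \<in> AH" for e e'
    proof -
      have dD: "(i,e) \<in> D" "(j,e') \<in> D" unfolding D_def using i j e e' by auto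
      have "(i,e) \<noteq> (j,e')" using ij by simp
      thus ?thesis using ps dD by blast
    qed
    have E: "(g ` ({i} \<times> VH) \<union> (\<Union>e\<in>AH. interior (ps (i,e)))) \<inter>
          (g ` ({j} \<times> VH) \<union> (\<Union>e\<in>AH. interior (ps (j,e)))) = {}"
    proof (rule equals0I)
      fix v assume vv: "v \<in> (g ` ({i} \<times> VH) \<union> (\<Union>e\<in>AH. interior (ps (i,e)))) \<inter>
          (g ` ({j} \<times> VH) \<union> (\<Union>e\<in>AH. interior (ps (j,e))))"
      have v1: "v \<in> g ` ({i} \<times> VH) \<union> (\<Union>e\<in>AH. interior (ps (i,e)))" using vv by (rule IntD1)
      have v2: "v \<in> g ` ({j} \<times> VH) \<union> (\<Union>e\<in>AH. interior (ps (j,e)))" using vv by (rule IntD2)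
      show False
      proof (cases "v \<in> g ` ({i} \<times> VH)")
        case True
        show False
        proof (cases "v \<in> g ` ({j} \<times> VH)")
          case True2: True
          show False using a1 True True2 by blast
        next
          case False
          then obtain e' where e': "e' \<in> AH" "v \<in> interior (ps (j,e'))" using v2 by blast
          show False using a2[OF e'(1)] True e'(2) by blast
        qed
      next
        case False
        then obtain e where e: "e \<in> AH" "v \<in> interior (ps (i,e))" using v1 by blast
        show False
        proof (cases "v \<in> g ` ({j} \<times> VH)")
          case True
          show False using a3[OF e(1)] True e(2) by blast
        next
          case False
          then obtain e' where e': "e' \<in> AH" "v \<in> interior (ps (j,e'))" using v2 by blast
          show False using a4[OF e(1) e'(1)] e(2) e'(2) by blast
        qed
      qed
    qed
    have "copy_verts VH AH (f i) (P i) \<inter> copy_verts VH AH (f j) (P j) \<subseteq>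
      (g ` ({i} \<times> VH) \<union> (\<Union>e\<in>AH. interior (ps (i,e)))) \<inter>
          (g ` ({j} \<times> VH) \<union> (\<Union>e\<in>AH. interior (ps (j,e))))"
      by (rule Int_mono[OF cv[OF i] cv[OF j]])
    thus ?thesis using E by simp
  qed
  show ?thesis unfolding has_k_disjoint_copies_def
    apply (rule exI[of _ f])
    apply (rule exI[of _ P])
    apply (intro conjI allI impI)
     apply (erule copy)
    apply (erule (2) disj)
    done
qed




lemma dp2: "(x,y)\<in>A \<Longrightarrow> x\<noteq>y \<Longrightarrow> dipath A [x,y]"
  by (auto simp: dipath_def less_Suc_eq)
lemma dp3: "(x,w)\<in>A \<Longrightarrow> (w,y)\<in>A \<Longrightarrow> distinct [x,w,y] \<Longrightarrow> dipath A [x,w,y]"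
  by (auto simp: dipath_def less_Suc_eq)
lemma dp4: "(x,a)\<in>A \<Longrightarrow> (a,b)\<in>A \<Longrightarrow> (b,y)\<in>A \<Longrightarrow> distinct [x,a,b,y] \<Longrightarrow> dipath A [x,a,b,y]"
  by (auto simp: dipath_def less_Suc_eq)
lemma dp5: "(x,a)\<in>A \<Longrightarrow> (a,b)\<in>A \<Longrightarrow> (b,c)\<in>A \<Longrightarrow> (c,y)\<in>A \<Longrightarrow> distinct [x,a,b,c,y]
   \<Longrightarrow> dipath A [x,a,b,c,y]"
  by (auto simp: dipath_def less_Suc_eq)

lemma int2: "interior [x,y] = {}" by (simp add: interior_def)
lemma int3: "interior [x,w,y] = {w}" by (simp add: interior_def)
lemma int4: "interior [x,a,b,y] = {a,b}" by (simp add: interior_def)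
lemma int5: "interior [x,a,b,c,y] = {a,b,c}" by (simp add: interior_def)

context tourn
begin

lemma card_diff_ge: "finite B \<Longrightarrow> finite U \<Longrightarrow> card B \<le> card (B - U) + card U"
  for B U :: "'b set"
proof -
  assume fB: "finite B" and fU: "finite U"
  have "card B \<le> card ((B - U) \<union> U)" using fB fU by (intro card_mono) auto
  also have "\<dots> \<le> card (B - U) + card U" by (rule card_Un_le)
  finally show ?thesis .
qed

lemma deg_tangle_path:
  assumes XV: "X \<subseteq> V" and sX: "\<forall>x\<in>X. a \<le> sc x \<and> sc x \<le> a + l"
    and cX: "5 * l + 7 * N + 4 \<le> card X"
    and x: "x \<in> X" and y: "y \<in> X" and xy: "x \<noteq> y"
    and fU: "finite U" and cU: "card U \<le> N"
  shows "\<exists>p. dipath A p \<and> hd p = x \<and> last p = y \<and> set p \<subseteq> V \<and> length p \<le> 5 \<and> interior p \<inter> U = {}"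
proof (cases "(x,y) \<in> A")
  case True
  show ?thesis
    by (rule exI[of _ "[x,y]"]) (use True xy x y XV in \<open>auto simp: dp2 int2\<close>)
next
  case False
  have xV: "x \<in> V" and yV: "y \<in> V" using x y XV by auto
  have yx: "(y,x) \<in> A" using tot2[OF xV yV xy False] .
  define Aset where "Aset = outs x - U - {y}"
  define Bset where "Bset = ins y - U - {x}"
  show ?thesis
  proof (cases "\<exists>w. w \<in> Aset \<inter> Bset")
    case True
    then obtain w where w: "w \<in> Aset" "w \<in> Bset" by blast
    have xw: "(x,w) \<in> A" and wy: "(w,y) \<in> A" and wV: "w \<in> V" and wU: "w \<notin> U" and wy': "w \<noteq> y"
      using w unfolding Aset_def Bset_def outs_def ins_def by auto
    have "x \<noteq> w" using xw noloop by auto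
    hence "dipath A [x,w,y]" using xw wy wy' xy by (intro dp3) auto
    thus ?thesis using xV yV wV wU by (intro exI[of _ "[x,w,y]"]) (auto simp: int3)
  next
    case False
    hence ABdisj: "Aset \<inter> Bset = {}" by blast
    show ?thesis
    proof (cases "\<exists>u\<in>Aset. \<exists>v\<in>Bset. (u,v) \<in> A")
      case True
      then obtain u v where u: "u \<in> Aset" and v: "v \<in> Bset" and uv: "(u,v) \<in> A" by blast
      have xu: "(x,u) \<in> A" and uV: "u \<in> V" and uU: "u \<notin> U" and uy: "u \<noteq> y"
        using u unfolding Aset_def outs_def by auto
      have vy: "(v,y) \<in> A" and vV: "v \<in> V" and vU: "v \<notin> U" and vx: "v \<noteq> x"
        using v unfolding Bset_def ins_def by auto
      have "x \<noteq> u" using xu noloop by auto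
      moreover have "u \<noteq> v" using uv noloop by auto
      moreover have "v \<noteq> y" using vy noloop by auto
      ultimately have "distinct [x,u,v,y]" using uy vx xy by auto
      hence "dipath A [x,u,v,y]" using xu uv vy by (intro dp4)
      thus ?thesis using xV yV uV vV uU vU by (intro exI[of _ "[x,u,v,y]"]) (auto simp: int4)
    next
      case False
      hence BA: "(v,u) \<in> A" if "u \<in> Aset" "v \<in> Bset" for u v
      proof -
        have "u \<in> V" "v \<in> V" using that unfolding Aset_def Bset_def outs_def ins_def by auto
        moreover have "u \<noteq> v" using that ABdisj by auto
        moreover have "(u,v) \<notin> A" using False that by auto
        ultimately show ?thesis using tot2 by blast
      qed
      have fAs: "finite Aset" and fBs: "finite Bset" and AsV: "Aset \<subseteq> V" and BsV: "Bset \<subseteq> V"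
        unfolding Aset_def Bset_def outs_def ins_def using finV by auto
      have yo: "y \<notin> outs x" using yx antisym unfolding outs_def by auto
      have xi: "x \<notin> ins y" using yx antisym unfolding ins_def by auto
      have F1: "sc x \<le> card Aset + card U"
      proof -
        have "Aset = outs x - U" unfolding Aset_def using yo by auto
        thus ?thesis unfolding sc_def using card_diff_ge[of "outs x" U] fU finV
          by (simp add: outs_def)
      qed
      have F2: "card (ins y) \<le> card Bset + card U"
      proof -
        have "Bset = ins y - U" unfolding Bset_def using xi by auto
        thus ?thesis using card_diff_ge[of "ins y" U] fU finV by (simp add: ins_def)
      qed
      have F4: "card (ins y) + sc y + 1 = card V" by (rule card_ins[OF yV])
      have F5: "a \<le> sc x" "sc y \<le> a + l" using sX x y by auto
      define R where "R = V - (Aset \<union> Bset \<union> U \<union> {x,y})"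
      have F3: "card Aset + card Bset + 2 + card R \<le> card V"
      proof -
        have d1: "Aset \<inter> Bset = {}" by (rule ABdisj)
        have xyAB: "x \<notin> Aset" "y \<notin> Aset" "x \<notin> Bset" "y \<notin> Bset"
          unfolding Aset_def Bset_def outs_def ins_def using noloop by auto
        have "card (Aset \<union> Bset) = card Aset + card Bset" using d1 fAs fBs by (simp add: card_Un_disjoint)
        moreover have "card ((Aset \<union> Bset) \<union> {x,y}) = card (Aset \<union> Bset) + card {x,y}"
          using xyAB fAs fBs by (intro card_Un_disjoint) auto
        moreover have "card {x,y} = 2" using xy by simp
        moreover have "card (((Aset \<union> Bset) \<union> {x,y}) \<union> R) = card ((Aset \<union> Bset) \<union> {x,y}) + card R"
          using fAs fBs finV unfolding R_def by (intro card_Un_disjoint) auto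
        moreover have "card (((Aset \<union> Bset) \<union> {x,y}) \<union> R) \<le> card V"
          using AsV BsV xV yV finV unfolding R_def by (intro card_mono) auto
        ultimately show ?thesis by linarith
      qed
      have cR: "card R + 1 \<le> l + 2 * card U" using F1 F2 F3 F4 F5 by linarith
      define S1 where "S1 = X \<inter> Bset"
      define S2 where "S2 = X \<inter> Aset"
      have cS1: "card S1 \<le> 2 * l + 2 * card U + 1"
      proof (cases "S1 = {}")
        case True thus ?thesis by simp
      next
        case False
        have S1V: "S1 \<subseteq> V" unfolding S1_def using XV by auto
        obtain z where z: "z \<in> S1" and zc: "card S1 \<le> 2 * card {w\<in>S1. (z,w)\<in>A} + 1"
          using exists_big_out[OF S1V False] by blast
        have zB: "z \<in> Bset" and zX: "z \<in> X" using z unfolding S1_def by auto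
        have sub: "Aset \<union> {w\<in>S1. (z,w)\<in>A} \<subseteq> outs z"
          using BA[OF _ zB] AsV S1V unfolding outs_def by auto
        have fz: "finite {w\<in>S1. (z,w)\<in>A}" using finite_subset[OF S1V finV] by auto
        have "card (Aset \<union> {w\<in>S1. (z,w)\<in>A}) = card Aset + card {w\<in>S1. (z,w)\<in>A}"
          using fAs fz ABdisj unfolding S1_def
          by (intro card_Un_disjoint) auto
        moreover have "card (Aset \<union> {w\<in>S1. (z,w)\<in>A}) \<le> sc z"
          unfolding sc_def using sub finV by (intro card_mono) (auto simp: outs_def)
        moreover have "sc z \<le> a + l" using sX zX by auto
        ultimately show ?thesis using zc F1 F5 by linarith
      qed
      have cS2: "card S2 \<le> 2 * l + 2 * card U + 1"
      proof (cases "S2 = {}")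
        case True thus ?thesis by simp
      next
        case False
        have S2V: "S2 \<subseteq> V" unfolding S2_def using XV by auto
        obtain z where z: "z \<in> S2" and zc: "card S2 \<le> 2 * card {w\<in>S2. (w,z)\<in>A} + 1"
          using exists_big_in[OF S2V False] by blast
        have zA: "z \<in> Aset" and zX: "z \<in> X" and zV: "z \<in> V" using z XV unfolding S2_def by auto
        have sub: "Bset \<union> {w\<in>S2. (w,z)\<in>A} \<subseteq> ins z"
          using BA[OF zA] BsV S2V unfolding ins_def by auto
        have fz: "finite {w\<in>S2. (w,z)\<in>A}" using finite_subset[OF S2V finV] by auto
        have "card (Bset \<union> {w\<in>S2. (w,z)\<in>A}) = card Bset + card {w\<in>S2. (w,z)\<in>A}"
          using fBs fz ABdisj unfolding S2_def
          by (intro card_Un_disjoint) auto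
        moreover have "card (Bset \<union> {w\<in>S2. (w,z)\<in>A}) \<le> card (ins z)"
          using sub finV by (intro card_mono) (auto simp: ins_def)
        moreover have "card (ins z) + sc z + 1 = card V" by (rule card_ins[OF zV])
        moreover have "a \<le> sc z" using sX zX by auto
        ultimately show ?thesis using zc F2 F4 F5 by linarith
      qed
      have cover: "X \<subseteq> {x,y} \<union> U \<union> S1 \<union> S2 \<union> R"
        unfolding S1_def S2_def R_def using XV by auto
      have fS1: "finite S1" unfolding S1_def using fBs by simp
      have fS2: "finite S2" unfolding S2_def using fAs by simp
      have fR: "finite R" unfolding R_def using finV by simp
      have "card X \<le> card ({x,y} \<union> U \<union> S1 \<union> S2 \<union> R)"
        using fU fS1 fS2 fR by (intro card_mono[OF _ cover]) auto
      also have "\<dots> \<le> card {x,y} + card U + card S1 + card S2 + card R"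
        by (meson card_Un_le add_le_mono le_trans order_refl)
      finally have "card X \<le> 2 + card U + card S1 + card S2 + card R"
        using xy by simp
      hence False using cX cU cR cS1 cS2 by linarith
      thus ?thesis ..
    qed
  qed
qed

lemma deg_tangle_linked:
  assumes XV: "X \<subseteq> V" and sX: "\<forall>x\<in>X. a \<le> sc x \<and> sc x \<le> a + l"
    and cX: "5 * l + 7 * N + 4 \<le> card X"
  shows "linked V A X N"
  unfolding linked_def using deg_tangle_path[OF XV sX cX] by blast

end



definition vdisj :: "('a \<times> 'a) set \<Rightarrow> bool" where
  "vdisj M \<longleftrightarrow> (\<forall>e\<in>M. \<forall>e'\<in>M. e \<noteq> e' \<longrightarrow> {fst e, snd e} \<inter> {fst e', snd e'} = {})"

context tourn
begin

definition tl_of :: "('a \<times> 'a) set \<Rightarrow> 'a \<Rightarrow> 'a" where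
  "tl_of M x = (SOME u. (u,x) \<in> M)"

lemma tl_of_in: "x \<in> snd ` M \<Longrightarrow> (tl_of M x, x) \<in> M"
  unfolding tl_of_def by (rule someI_ex) force

lemma tl_of_inj: "vdisj M \<Longrightarrow> inj_on (tl_of M) (snd ` M)"
proof (rule inj_onI)
  fix x x' assume vd: "vdisj M" and x: "x \<in> snd ` M" and x': "x' \<in> snd ` M"
    and eq: "tl_of M x = tl_of M x'"
  have e1: "(tl_of M x, x) \<in> M" and e2: "(tl_of M x', x') \<in> M" using tl_of_in x x' by auto
  show "x = x'"
  proof (rule ccontr)
    assume "x \<noteq> x'"
    hence "(tl_of M x, x) \<noteq> (tl_of M x', x')" by simp
    hence "{tl_of M x, x} \<inter> {tl_of M x', x'} = {}" using vd e1 e2 unfolding vdisj_def by force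
    thus False using eq by auto
  qed
qed

lemma match_tangle_path:
  assumes MA: "M \<subseteq> A" and vd: "vdisj M"
    and sM: "\<forall>e\<in>M. \<sigma> + g \<le> sc (snd e) \<and> sc (fst e) + g < \<sigma>"
    and gN: "N + 3 \<le> 2 * g" and DN: "2 * N + 2 \<le> D"
    and x: "x \<in> snd ` M" and y: "y \<in> snd ` M" and xy: "x \<noteq> y"
    and yD: "D \<le> card {x'\<in>snd ` M. (x',y)\<in>A}"
    and fU: "finite U" and cU: "card U \<le> N"
  shows "\<exists>p. dipath A p \<and> hd p = x \<and> last p = y \<and> set p \<subseteq> V \<and> length p \<le> 5 \<and> interior p \<inter> U = {}"
proof -
  have XV: "snd ` M \<subseteq> V" using MA AV by force
  have xV: "x \<in> V" and yV: "y \<in> V" using x y XV by auto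
  have scX: "\<sigma> + g \<le> sc z" if "z \<in> snd ` M" for z using that sM by auto
  show ?thesis
  proof (cases "(x,y) \<in> A")
    case True
    show ?thesis
      by (rule exI[of _ "[x,y]"]) (use True xy xV yV in \<open>auto simp: dp2 int2\<close>)
  next
    case False
    define C where "C = {x'\<in>snd ` M. (x',y)\<in>A}"
    define Bad where "Bad = U \<union> {x} \<union> {x'\<in>snd ` M. tl_of M x' \<in> U}"
    have fX: "finite (snd ` M)" using XV finV finite_subset by blast
    have cT: "card {x'\<in>snd ` M. tl_of M x' \<in> U} \<le> card U"
    proof -
      have "inj_on (tl_of M) {x'\<in>snd ` M. tl_of M x' \<in> U}"
        using tl_of_inj[OF vd] by (rule inj_on_subset) auto
      moreover have "tl_of M ` {x'\<in>snd ` M. tl_of M x' \<in> U} \<subseteq> U" by auto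
      ultimately show ?thesis using fU card_inj_on_le by blast
    qed
    have cBad: "card Bad \<le> 2 * N + 1"
    proof -
      have "card Bad \<le> card (U \<union> {x}) + card {x'\<in>snd ` M. tl_of M x' \<in> U}"
        unfolding Bad_def by (rule card_Un_le)
      moreover have "card (U \<union> {x}) \<le> card U + 1" using card_Un_le[of U "{x}"] by simp
      ultimately show ?thesis using cT cU by linarith
    qed
    have fBad: "finite Bad" unfolding Bad_def using fU fX by auto
    have "card C \<le> card (C - Bad) + card Bad" by (rule card_diff_ge) (use fX fBad in \<open>auto simp: C_def\<close>)
    moreover have "D \<le> card C" using yD unfolding C_def .
    ultimately have "card (C - Bad) \<noteq> 0" using cBad DN by linarith
    hence "C - Bad \<noteq> {}" by (metis card.empty)
    then obtain xs where xs: "xs \<in> C" "xs \<notin> Bad" by blast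
    define us where "us = tl_of M xs"
    have xsX: "xs \<in> snd ` M" and xsy: "(xs,y) \<in> A" using xs unfolding C_def by auto
    have usxs: "(us, xs) \<in> M" unfolding us_def using tl_of_in[OF xsX] .
    have usxsA: "(us,xs) \<in> A" using usxs MA by auto
    have xsU: "xs \<notin> U" and xsx: "xs \<noteq> x" and usU: "us \<notin> U"
      using xs xsX unfolding Bad_def us_def by auto
    have scus: "sc us + g < \<sigma>" using sM usxs by force
    have scx: "\<sigma> + g \<le> sc x" by (rule scX[OF x])
    have scy: "\<sigma> + g \<le> sc y" by (rule scX[OF y])
    have usV: "us \<in> V" and xsV: "xs \<in> V" using usxsA AV by auto
    have xus: "x \<noteq> us" using scus scx by auto
    define P2 where "P2 = {w\<in>V. (x,w)\<in>A \<and> (w,us)\<in>A}"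
    have tp: "sc x \<le> card P2 + sc us + 1" unfolding P2_def by (rule two_paths[OF xV usV xus])
    have fP2: "finite P2" unfolding P2_def using finV by simp
    have "card P2 \<le> card (P2 - (U \<union> {xs,y})) + card (U \<union> {xs,y})"
      by (rule card_diff_ge) (use fP2 fU in auto)
    moreover have "card (U \<union> {xs,y}) \<le> card U + 2"
    proof -
      have "card {xs,y} \<le> 2" by (simp add: card_insert_if)
      thus ?thesis using card_Un_le[of U "{xs,y}"] by linarith
    qed
    ultimately have "card (P2 - (U \<union> {xs,y})) \<noteq> 0" using tp scus scx cU gN by linarith
    hence "P2 - (U \<union> {xs,y}) \<noteq> {}" by (metis card.empty)
    then obtain w where w: "w \<in> P2" "w \<notin> U" "w \<noteq> xs" "w \<noteq> y" by blast
    have xw: "(x,w) \<in> A" and wus: "(w,us) \<in> A" and wV: "w \<in> V" using w unfolding P2_def by auto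
    have d1: "x \<noteq> w" using xw noloop by auto
    have d2: "w \<noteq> us" using wus noloop by auto
    have d3: "us \<noteq> xs" using usxsA noloop by auto
    have d4: "us \<noteq> y" using scus scy by auto
    have d5: "xs \<noteq> y" using xsy noloop by auto
    have "distinct [x,w,us,xs,y]" using d1 d2 d3 d4 d5 xus xsx xy w by auto
    hence "dipath A [x,w,us,xs,y]" using xw wus usxsA xsy by (intro dp5)
    thus ?thesis using xV yV wV usV xsV w(2) usU xsU
      by (intro exI[of _ "[x,w,us,xs,y]"]) (auto simp: int5)
  qed
qed

lemma match_tangle_linked:
  assumes MA: "M \<subseteq> A" and vd: "vdisj M"
    and sM: "\<forall>e\<in>M. \<sigma> + g \<le> sc (snd e) \<and> sc (fst e) + g < \<sigma>"
    and gN: "N + 3 \<le> 2 * g" and DN: "2 * N + 2 \<le> D"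
  shows "linked V A {x\<in>snd ` M. D \<le> card {x'\<in>snd ` M. (x',x)\<in>A}} N"
  unfolding linked_def using match_tangle_path[OF MA vd sM gN DN] by blast

lemma match_tangle_card:
  assumes MA: "M \<subseteq> A" and D1: "1 \<le> D"
  shows "card (snd ` M) + 1 \<le> card {x\<in>snd ` M. D \<le> card {x'\<in>snd ` M. (x',x)\<in>A}} + 2 * D"
proof -
  define X where "X = snd ` M"
  define J where "J = {x\<in>X. D \<le> card {x'\<in>X. (x',x)\<in>A}}"
  define S where "S = X - J"
  have XV: "X \<subseteq> V" unfolding X_def using MA AV by force
  have fX: "finite X" using XV finV finite_subset by blast
  have JX: "J \<subseteq> X" unfolding J_def by auto
  have fJ: "finite J" using fX JX finite_subset by blast
  have "card S = card X - card J" unfolding S_def by (rule card_Diff_subset[OF fJ JX])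
  moreover have "card J \<le> card X" by (rule card_mono[OF fX JX])
  ultimately have XJS: "card X = card J + card S" by linarith
  have cS: "card S + 1 \<le> 2 * D"
  proof (cases "S = {}")
    case True thus ?thesis using D1 by simp
  next
    case False
    have SV: "S \<subseteq> V" unfolding S_def using XV by auto
    obtain z where z: "z \<in> S" and zc: "card S \<le> 2 * card {w\<in>S. (w,z)\<in>A} + 1"
      using exists_big_in[OF SV False] by blast
    have "card {w\<in>S. (w,z)\<in>A} \<le> card {x'\<in>X. (x',z)\<in>A}"
      using fX unfolding S_def by (intro card_mono) auto
    moreover have "card {x'\<in>X. (x',z)\<in>A} < D" using z unfolding S_def J_def by auto
    ultimately show ?thesis using zc by linarith
  qed
  show ?thesis using XJS cS unfolding X_def J_def by linarith
qed

end



lemma vdisj_subset: "vdisj M \<Longrightarrow> M' \<subseteq> M \<Longrightarrow> vdisj M'"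
  unfolding vdisj_def by blast

lemma vdisj_inj_snd: "vdisj M \<Longrightarrow> inj_on snd M"
proof (rule inj_onI)
  fix e e' assume vd: "vdisj M" and e: "e \<in> M" and e': "e' \<in> M" and eq: "snd e = snd e'"
  show "e = e'"
  proof (rule ccontr)
    assume "e \<noteq> e'"
    hence "{fst e, snd e} \<inter> {fst e', snd e'} = {}" using vd e e' unfolding vdisj_def by blast
    thus False using eq by auto
  qed
qed

lemma match_or_cover:
  assumes fE: "finite E"
  shows "(\<exists>M. M \<subseteq> E \<and> vdisj M \<and> \<beta> \<le> card M) \<or>
         (\<exists>Z. finite Z \<and> card Z < 2 * \<beta> \<and> (\<forall>e\<in>E. fst e \<in> Z \<or> snd e \<in> Z))"
proof -
  define Ms where "Ms = {M. M \<subseteq> E \<and> vdisj M}"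
  have fMs: "finite Ms" unfolding Ms_def using fE by simp
  have ne: "{} \<in> Ms" unfolding Ms_def vdisj_def by simp
  define c where "c = Max (card ` Ms)"
  have "c \<in> card ` Ms" unfolding c_def using fMs ne by (intro Max_in) auto
  then obtain M0 where M0: "M0 \<in> Ms" and cM0: "card M0 = c" by auto
  have maxc: "card M \<le> c" if "M \<in> Ms" for M
    unfolding c_def using fMs that by (intro Max_ge) auto
  show ?thesis
  proof (cases "\<beta> \<le> c")
    case True
    thus ?thesis using M0 cM0 unfolding Ms_def by blast
  next
    case False
    define Z where "Z = fst ` M0 \<union> snd ` M0"
    have fM0: "finite M0" using M0 fE unfolding Ms_def using finite_subset by blast
    have fZ: "finite Z" unfolding Z_def using fM0 by simp
    have "card Z \<le> card (fst ` M0) + card (snd ` M0)" unfolding Z_def by (rule card_Un_le)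
    also have "\<dots> \<le> card M0 + card M0" using card_image_le[OF fM0] by (meson add_mono)
    finally have cZ: "card Z < 2 * \<beta>" using False cM0 by linarith
    have cov: "\<forall>e\<in>E. fst e \<in> Z \<or> snd e \<in> Z"
    proof (rule ballI, rule ccontr)
      fix e assume e: "e \<in> E" and nc: "\<not> (fst e \<in> Z \<or> snd e \<in> Z)"
      have eM: "e \<notin> M0" using nc unfolding Z_def by auto
      have "vdisj (insert e M0)"
        unfolding vdisj_def
      proof (intro ballI impI)
        fix a b assume a: "a \<in> insert e M0" and b: "b \<in> insert e M0" and ab: "a \<noteq> b"
        show "{fst a, snd a} \<inter> {fst b, snd b} = {}"
        proof (cases "a = e")
          case True
          hence bM: "b \<in> M0" using b ab by auto
          have "fst b \<in> Z" "snd b \<in> Z" using bM unfolding Z_def by auto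
          thus ?thesis using True nc by auto
        next
          case False
          hence aM: "a \<in> M0" using a by auto
          show ?thesis
          proof (cases "b = e")
            case True
            have "fst a \<in> Z" "snd a \<in> Z" using aM unfolding Z_def by auto
            thus ?thesis using True nc by auto
          next
            case False
            hence bM: "b \<in> M0" using b by auto
            show ?thesis using M0 aM bM ab unfolding Ms_def vdisj_def by blast
          qed
        qed
      qed
      hence "insert e M0 \<in> Ms" using M0 e unfolding Ms_def by auto
      hence "card (insert e M0) \<le> c" by (rule maxc)
      moreover have "card (insert e M0) = c + 1" using eM fM0 cM0 by simp
      ultimately show False by simp
    qed
    show ?thesis using fZ cZ cov by blast
  qed
qed

context tourn
begin

definition cross :: "nat \<Rightarrow> ('a \<times> 'a) set" where
  "cross \<sigma> = {e\<in>A. sc (fst e) < \<sigma> \<and> \<sigma> \<le> sc (snd e)}"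

lemma finA: "finite A"
proof -
  have "A \<subseteq> V \<times> V" using AV by auto
  thus ?thesis using finV finite_subset by blast
qed

lemma level:
  assumes gN: "N + 3 \<le> 2 * g" and DN: "2 * N + 2 \<le> D"
    and b1: "Nimg + 2 * D \<le> \<beta>1" and b2: "10 * g + 7 * N + 4 \<le> \<beta>2" and b2': "Nimg \<le> \<beta>2"
  shows "(\<exists>Z. finite Z \<and> card Z < 2 * (\<beta>1 + \<beta>2) \<and> (\<forall>e\<in>cross \<sigma>. fst e \<in> Z \<or> snd e \<in> Z)) \<or>
         (\<exists>J. J \<subseteq> V \<and> linked V A J N \<and> Nimg \<le> card J)"
proof -
  have fE: "finite (cross \<sigma>)" unfolding cross_def using finA by simp
  from match_or_cover[OF fE, of "\<beta>1 + \<beta>2"]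
  show ?thesis
  proof
    assume "\<exists>M. M \<subseteq> cross \<sigma> \<and> vdisj M \<and> \<beta>1 + \<beta>2 \<le> card M"
    then obtain M where ME: "M \<subseteq> cross \<sigma>" and vd: "vdisj M" and cM: "\<beta>1 + \<beta>2 \<le> card M" by blast
    have MA: "M \<subseteq> A" using ME unfolding cross_def by auto
    have fM: "finite M" using MA finA finite_subset by blast
    define Good where "Good = {e\<in>M. \<sigma> + g \<le> sc (snd e) \<and> sc (fst e) + g < \<sigma>}"
    have GM: "Good \<subseteq> M" unfolding Good_def by auto
    have fG: "finite Good" using fM GM finite_subset by blast
    show ?thesis
    proof (cases "\<beta>1 \<le> card Good")
      case True
      have GA: "Good \<subseteq> A" using GM MA by auto
      have vdG: "vdisj Good" using vdisj_subset[OF vd GM] .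
      have sG: "\<forall>e\<in>Good. \<sigma> + g \<le> sc (snd e) \<and> sc (fst e) + g < \<sigma>" unfolding Good_def by auto
      define J where "J = {x\<in>snd ` Good. D \<le> card {x'\<in>snd ` Good. (x',x)\<in>A}}"
      have lk: "linked V A J N" unfolding J_def by (rule match_tangle_linked[OF GA vdG sG gN DN])
      have D1: "1 \<le> D" using DN by simp
      have cc: "card (snd ` Good) + 1 \<le> card J + 2 * D"
        unfolding J_def by (rule match_tangle_card[OF GA D1])
      have "card (snd ` Good) = card Good" by (rule card_image[OF vdisj_inj_snd[OF vdG]])
      hence "Nimg \<le> card J" using cc True b1 by linarith
      moreover have "J \<subseteq> V" unfolding J_def using GA AV by force
      ultimately show ?thesis using lk by blast
    next
      case False
      define B where "B = M - Good"
      have cB: "\<beta>2 \<le> card B"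
      proof -
        have "card B = card M - card Good" unfolding B_def by (rule card_Diff_subset[OF fG GM])
        thus ?thesis using cM False by linarith
      qed
      define \<phi> where "\<phi> = (\<lambda>e::'a\<times>'a. if sc (snd e) < \<sigma> + g then snd e else fst e)"
      define W0 where "W0 = {w\<in>V. \<sigma> \<le> sc w + g \<and> sc w < \<sigma> + g}"
      have phin: "\<phi> e \<in> {fst e, snd e}" for e unfolding \<phi>_def by auto
      have injp: "inj_on \<phi> B"
      proof (rule inj_onI)
        fix e e' assume e: "e \<in> B" and e': "e' \<in> B" and eq: "\<phi> e = \<phi> e'"
        show "e = e'"
        proof (rule ccontr)
          assume "e \<noteq> e'"
          hence "{fst e, snd e} \<inter> {fst e', snd e'} = {}" using vd e e' unfolding vdisj_def B_def by blast
          thus False using eq phin[of e] phin[of e'] by auto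
        qed
      qed
      have img: "\<phi> ` B \<subseteq> W0"
      proof
        fix w assume "w \<in> \<phi> ` B"
        then obtain e where e: "e \<in> B" and w: "w = \<phi> e" by blast
        have eA: "e \<in> A" and c1: "sc (fst e) < \<sigma>" and c2: "\<sigma> \<le> sc (snd e)"
          using e ME unfolding B_def cross_def by auto
        have ng: "\<not> (\<sigma> + g \<le> sc (snd e) \<and> sc (fst e) + g < \<sigma>)" using e unfolding B_def Good_def by auto
        have fV: "fst e \<in> V" and sV: "snd e \<in> V" using eA AV by (cases e, auto)+
        show "w \<in> W0"
        proof (cases "sc (snd e) < \<sigma> + g")
          case True
          thus ?thesis using w c2 sV unfolding \<phi>_def W0_def by auto
        next
          case False
          thus ?thesis using w c1 ng fV unfolding \<phi>_def W0_def by auto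
        qed
      qed
      have fW0: "finite W0" unfolding W0_def using finV by simp
      have "card B \<le> card W0" using card_inj_on_le[OF injp img fW0] .
      hence cW: "\<beta>2 \<le> card W0" using cB by linarith
      have W0V: "W0 \<subseteq> V" unfolding W0_def by auto
      have sW: "\<forall>x\<in>W0. \<sigma> - g \<le> sc x \<and> sc x \<le> (\<sigma> - g) + 2 * g" unfolding W0_def by auto
      have "5 * (2 * g) + 7 * N + 4 \<le> card W0" using cW b2 by linarith
      hence "linked V A W0 N" by (rule deg_tangle_linked[OF W0V sW])
      thus ?thesis using W0V cW b2' by (intro disjI2 exI[of _ W0]) auto
    qed
  next
    assume "\<exists>Z. finite Z \<and> card Z < 2 * (\<beta>1 + \<beta>2) \<and> (\<forall>e\<in>cross \<sigma>. fst e \<in> Z \<or> snd e \<in> Z)"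
    thus ?thesis by blast
  qed
qed

lemma slice:
  assumes "7 * N + 4 \<le> card {v\<in>V. sc v = c}"
  shows "linked V A {v\<in>V. sc v = c} N"
proof -
  have "5 * 0 + 7 * N + 4 \<le> card {v\<in>V. sc v = c}" using assms by simp
  moreover have "{v\<in>V. sc v = c} \<subseteq> V" by auto
  moreover have "\<forall>x\<in>{v\<in>V. sc v = c}. c \<le> sc x \<and> sc x \<le> c + 0" by auto
  ultimately show ?thesis using deg_tangle_linked by blast
qed

end



lemma card_uncross:
  assumes f1: "finite Y1" and f2: "finite Y2"
    and i: "X1 \<inter> X2 \<subseteq> Y1 \<inter> Y2" and u: "X1 \<union> X2 \<subseteq> Y1 \<union> Y2"
  shows "card X1 + card X2 \<le> card Y1 + card Y2"
proof -
  have fX1: "finite X1" and fX2: "finite X2" using u f1 f2 finite_subset by blast+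
  have "card X1 + card X2 = card (X1 \<union> X2) + card (X1 \<inter> X2)" using card_Un_Int[OF fX1 fX2] .
  also have "\<dots> \<le> card (Y1 \<union> Y2) + card (Y1 \<inter> Y2)"
    using u i f1 f2 by (intro add_mono card_mono) auto
  also have "\<dots> = card Y1 + card Y2" using card_Un_Int[OF f1 f2] by simp
  finally show ?thesis .
qed

lemma pw_le:
  assumes fV: "finite V" and I: "interval_decomp V A I"
    and B: "\<And>\<alpha>. card {v\<in>V. fst (I v) \<le> \<alpha> \<and> \<alpha> \<le> snd (I v)} \<le> b"
  shows "pathwidth V A \<le> b"
proof -
  have dw_le: "decomp_width V J \<le> card V" for J
  proof -
    have "(\<lambda>\<alpha>. card {v\<in>V. fst (J v) \<le> \<alpha> \<and> \<alpha> \<le> snd (J v)}) ` UNIV \<subseteq> {0..card V}"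
      using fV by (auto intro!: card_mono)
    hence "finite ((\<lambda>\<alpha>. card {v\<in>V. fst (J v) \<le> \<alpha> \<and> \<alpha> \<le> snd (J v)}) ` UNIV)"
      using finite_subset by blast
    thus ?thesis unfolding decomp_width_def using fV by (subst Max_le_iff) (auto intro!: card_mono)
  qed
  have dwI: "decomp_width V I \<le> b"
  proof -
    have "(\<lambda>\<alpha>. card {v\<in>V. fst (I v) \<le> \<alpha> \<and> \<alpha> \<le> snd (I v)}) ` UNIV \<subseteq> {0..card V}"
      using fV by (auto intro!: card_mono)
    hence "finite ((\<lambda>\<alpha>. card {v\<in>V. fst (I v) \<le> \<alpha> \<and> \<alpha> \<le> snd (I v)}) ` UNIV)"
      using finite_subset by blast
    thus ?thesis unfolding decomp_width_def using B by (subst Max_le_iff) auto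
  qed
  have fin: "finite {decomp_width V J | J. interval_decomp V A J}"
  proof -
    have "{decomp_width V J | J. interval_decomp V A J} \<subseteq> {0..card V}" using dw_le by auto
    thus ?thesis using finite_subset by blast
  qed
  have "pathwidth V A \<le> decomp_width V I"
    unfolding pathwidth_def using fin I by (intro Min_le) auto
  thus ?thesis using dwI by linarith
qed

context tourn
begin

definition Up :: "nat \<Rightarrow> 'a set" where "Up \<sigma> = {v\<in>V. \<sigma> \<le> sc v}"
definition Dn :: "nat \<Rightarrow> 'a set" where "Dn \<sigma> = {v\<in>V. sc v < \<sigma>}"
definition bd :: "'a set \<Rightarrow> 'a set" where "bd P = {v\<in>P. \<exists>u\<in>V - P. (u,v)\<in>A}"
definition Fc :: "nat \<Rightarrow> 'a set \<Rightarrow> nat" where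
  "Fc \<sigma> P = card (bd P) + card (P \<inter> Dn \<sigma>) + card (Up \<sigma> - P)"
definition key :: "nat \<Rightarrow> 'a set \<Rightarrow> nat" where
  "key \<sigma> P = Fc \<sigma> P * (card V + 1) + card P"
definition Ps :: "nat \<Rightarrow> 'a set" where
  "Ps \<sigma> = (SOME P. P \<subseteq> V \<and> (\<forall>Q. Q \<subseteq> V \<longrightarrow> key \<sigma> P \<le> key \<sigma> Q))"

lemma Ps_ex: "\<exists>P. P \<subseteq> V \<and> (\<forall>Q. Q \<subseteq> V \<longrightarrow> key \<sigma> P \<le> key \<sigma> Q)"
proof -
  have fin: "finite (key \<sigma> ` Pow V)" using finV by simp
  have "Min (key \<sigma> ` Pow V) \<in> key \<sigma> ` Pow V" using fin by (intro Min_in) auto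
  then obtain P where P: "P \<in> Pow V" and kP: "key \<sigma> P = Min (key \<sigma> ` Pow V)" by auto
  have "\<forall>Q. Q \<subseteq> V \<longrightarrow> key \<sigma> P \<le> key \<sigma> Q" using kP fin by auto
  thus ?thesis using P by auto
qed

lemma Ps_props: "Ps \<sigma> \<subseteq> V" "Q \<subseteq> V \<Longrightarrow> key \<sigma> (Ps \<sigma>) \<le> key \<sigma> Q"
  using someI_ex[OF Ps_ex[of \<sigma>]] unfolding Ps_def[symmetric] by auto

lemma card_le_V: "P \<subseteq> V \<Longrightarrow> card P \<le> card V"
  using finV by (rule card_mono)

lemma Ps_min: assumes Q: "Q \<subseteq> V" shows "Fc \<sigma> (Ps \<sigma>) \<le> Fc \<sigma> Q"
proof (rule ccontr)
  assume "\<not> ?thesis"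
  hence lt: "Fc \<sigma> Q + 1 \<le> Fc \<sigma> (Ps \<sigma>)" by simp
  have "key \<sigma> Q \<le> Fc \<sigma> Q * (card V + 1) + card V" unfolding key_def using card_le_V[OF Q] by simp
  also have "\<dots> < (Fc \<sigma> Q + 1) * (card V + 1)" by simp
  also have "\<dots> \<le> Fc \<sigma> (Ps \<sigma>) * (card V + 1)" using lt by (intro mult_right_mono) auto
  also have "\<dots> \<le> key \<sigma> (Ps \<sigma>)" unfolding key_def by simp
  finally show False using Ps_props(2)[where \<sigma>=\<sigma>, OF Q] by simp
qed

lemma Ps_tie: assumes Q: "Q \<subseteq> V" and eq: "Fc \<sigma> Q = Fc \<sigma> (Ps \<sigma>)" shows "card (Ps \<sigma>) \<le> card Q"
  using Ps_props(2)[where \<sigma>=\<sigma>, OF Q] eq unfolding key_def by simp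

lemma uncross:
  assumes P: "P \<subseteq> V" and Q: "Q \<subseteq> V" and s: "\<sigma>' \<le> \<sigma>"
  shows "Fc \<sigma> (P \<inter> Q) + Fc \<sigma>' (P \<union> Q) \<le> Fc \<sigma> P + Fc \<sigma>' Q"
proof -
  have fP: "finite P" and fQ: "finite Q" using P Q finV finite_subset by blast+
  have DD: "Dn \<sigma>' \<subseteq> Dn \<sigma>" and UU: "Up \<sigma> \<subseteq> Up \<sigma>'" using s unfolding Dn_def Up_def by auto
  have fU: "finite (Up \<sigma>)" "finite (Up \<sigma>')" unfolding Up_def using finV by auto
  have c1: "card (bd (P \<inter> Q)) + card (bd (P \<union> Q)) \<le> card (bd P) + card (bd Q)"
    by (rule card_uncross) (use fP fQ in \<open>auto simp: bd_def\<close>)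
  have c2: "card (P \<inter> Q \<inter> Dn \<sigma>) + card ((P \<union> Q) \<inter> Dn \<sigma>') \<le> card (P \<inter> Dn \<sigma>) + card (Q \<inter> Dn \<sigma>')"
    by (rule card_uncross) (use fP fQ DD in auto)
  have c3: "card (Up \<sigma> - P \<inter> Q) + card (Up \<sigma>' - (P \<union> Q)) \<le> card (Up \<sigma> - P) + card (Up \<sigma>' - Q)"
    by (rule card_uncross) (use fU UU in auto)
  show ?thesis unfolding Fc_def using c1 c2 c3 by linarith
qed

lemma nested: assumes s: "\<sigma>' \<le> \<sigma>" shows "Ps \<sigma> \<subseteq> Ps \<sigma>'"
proof -
  define P where "P = Ps \<sigma>"
  define Q where "Q = Ps \<sigma>'"
  have PV: "P \<subseteq> V" and QV: "Q \<subseteq> V" unfolding P_def Q_def using Ps_props(1) by auto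
  have u: "Fc \<sigma> (P \<inter> Q) + Fc \<sigma>' (P \<union> Q) \<le> Fc \<sigma> P + Fc \<sigma>' Q" by (rule uncross[OF PV QV s])
  have m1: "Fc \<sigma> P \<le> Fc \<sigma> (P \<inter> Q)" unfolding P_def by (rule Ps_min) (use PV in \<open>auto simp: P_def\<close>)
  have m2: "Fc \<sigma>' Q \<le> Fc \<sigma>' (P \<union> Q)" unfolding Q_def by (rule Ps_min) (use PV QV in \<open>auto simp: Q_def\<close>)
  have "Fc \<sigma> (P \<inter> Q) = Fc \<sigma> (Ps \<sigma>)" using u m1 m2 unfolding P_def by linarith
  hence "card (Ps \<sigma>) \<le> card (P \<inter> Q)" by (rule Ps_tie[rotated]) (use PV in auto)
  hence "card P \<le> card (P \<inter> Q)" unfolding P_def .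
  moreover have "finite P" using PV finV finite_subset by blast
  ultimately have "P \<inter> Q = P" by (metis Int_lower1 card_seteq finite_Int)
  thus ?thesis unfolding P_def Q_def by blast
qed

lemma Ps_top: "Ps (card V) = {}"
proof -
  have "Up (card V) = {}" unfolding Up_def using sc_less by fastforce
  hence "Fc (card V) {} = 0" unfolding Fc_def bd_def by simp
  hence "key (card V) {} = 0" unfolding key_def by simp
  hence "key (card V) (Ps (card V)) = 0" using Ps_props(2)[of "{}" "card V"] by simp
  hence "card (Ps (card V)) = 0" unfolding key_def by simp
  moreover have "finite (Ps (card V))" using Ps_props(1) finV finite_subset by blast
  ultimately show ?thesis by simp
qed

lemma Ps_bot: "Ps 0 = V"
proof -
  have "Fc 0 V = 0" unfolding Fc_def bd_def Dn_def Up_def by simp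
  hence "Fc 0 (Ps 0) = 0" using Ps_min[of V 0] by simp
  hence "card (Up 0 - Ps 0) = 0" unfolding Fc_def by simp
  moreover have "Up 0 = V" unfolding Up_def by simp
  moreover have "finite (V - Ps 0)" using finV by simp
  ultimately have "V - Ps 0 = {}" by simp
  thus ?thesis using Ps_props(1)[of 0] by blast
qed

lemma Fc_cover:
  assumes fZ: "finite Z" and cov: "\<forall>e\<in>cross \<sigma>. fst e \<in> Z \<or> snd e \<in> Z"
  shows "Fc \<sigma> (Ps \<sigma>) \<le> 2 * card Z"
proof -
  define Q where "Q = Up \<sigma> \<union> (Z \<inter> Dn \<sigma>)"
  have QV: "Q \<subseteq> V" unfolding Q_def Up_def Dn_def by auto
  have b: "bd Q \<subseteq> Z"
  proof
    fix v assume "v \<in> bd Q"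
    then obtain u where vQ: "v \<in> Q" and u: "u \<in> V" "u \<notin> Q" and uv: "(u,v) \<in> A" unfolding bd_def by auto
    have us: "sc u < \<sigma>" and uZ: "u \<notin> Z" using u unfolding Q_def Up_def Dn_def by auto
    show "v \<in> Z"
    proof (cases "v \<in> Up \<sigma>")
      case True
      hence "(u,v) \<in> cross \<sigma>" using uv us unfolding cross_def Up_def by auto
      thus ?thesis using cov uZ by fastforce
    next
      case False thus ?thesis using vQ unfolding Q_def by auto
    qed
  qed
  have "Fc \<sigma> Q \<le> card Z + card Z"
  proof -
    have "card (bd Q) \<le> card Z" using b fZ by (rule card_mono[rotated])
    moreover have "card (Q \<inter> Dn \<sigma>) \<le> card Z"
      using fZ by (intro card_mono) (auto simp: Q_def Up_def Dn_def)
    moreover have "Up \<sigma> - Q = {}" unfolding Q_def by auto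
    hence "card (Up \<sigma> - Q) = 0" by (metis card.empty)
    ultimately show ?thesis unfolding Fc_def by linarith
  qed
  thus ?thesis using Ps_min[OF QV, of \<sigma>] by linarith
qed

end



context tourn
begin

definition lev :: "'a \<Rightarrow> nat" where "lev v = Max {\<sigma>. \<sigma> \<le> card V \<and> v \<in> Ps \<sigma>}"

lemma lev_iff: assumes v: "v \<in> V" shows "v \<in> Ps \<sigma> \<longleftrightarrow> \<sigma> \<le> lev v"
proof -
  define S where "S = {\<sigma>. \<sigma> \<le> card V \<and> v \<in> Ps \<sigma>}"
  have fS: "finite S" unfolding S_def by (rule finite_subset[of _ "{0..card V}"]) auto
  have "0 \<in> S" unfolding S_def using Ps_bot v by auto
  hence ne: "S \<noteq> {}" by blast
  have lS: "lev v \<in> S" unfolding lev_def S_def[symmetric] using fS ne by (rule Max_in)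
  show ?thesis
  proof
    assume vP: "v \<in> Ps \<sigma>"
    show "\<sigma> \<le> lev v"
    proof (cases "\<sigma> \<le> card V")
      case True
      hence "\<sigma> \<in> S" unfolding S_def using vP by auto
      hence "\<sigma> \<le> Max S" using Max_ge[OF fS] by blast
      thus ?thesis unfolding lev_def S_def[symmetric] .
    next
      case False
      hence "Ps \<sigma> \<subseteq> Ps (card V)" by (intro nested) auto
      thus ?thesis using vP Ps_top by auto
    qed
  next
    assume "\<sigma> \<le> lev v"
    hence "Ps (lev v) \<subseteq> Ps \<sigma>" by (rule nested)
    moreover have "v \<in> Ps (lev v)" using lS unfolding S_def by auto
    ultimately show "v \<in> Ps \<sigma>" by blast
  qed
qed

definition mlev :: "'a \<Rightarrow> nat" where "mlev v = Min (lev ` ({v} \<union> ins v))"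

definition Iv :: "'a \<Rightarrow> int \<times> int" where "Iv v = (- int (lev v), - int (mlev v))"

lemma fin_ins: "finite ({v} \<union> ins v)" unfolding ins_def using finV by simp

lemma mlev_le: "u \<in> {v} \<union> ins v \<Longrightarrow> mlev v \<le> lev u"
  unfolding mlev_def using fin_ins by (intro Min_le) auto

lemma mlev_in: "\<exists>u\<in>{v} \<union> ins v. mlev v = lev u"
proof -
  have "mlev v \<in> lev ` ({v} \<union> ins v)" unfolding mlev_def using fin_ins by (intro Min_in) auto
  thus ?thesis by auto
qed

lemma Iv_decomp: "interval_decomp V A Iv"
  unfolding interval_decomp_def
proof (intro conjI ballI impI)
  fix v assume "v \<in> V"
  show "fst (Iv v) \<le> snd (Iv v)" unfolding Iv_def using mlev_le[of v v] by simp
next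
  fix u v assume u: "u \<in> V" and v: "v \<in> V" and lt: "snd (Iv u) < fst (Iv v)"
  hence lt': "lev v < mlev u" unfolding Iv_def by simp
  have uv: "u \<noteq> v" using lt' mlev_le[of u u] by auto
  have "(v,u) \<notin> A"
  proof
    assume "(v,u) \<in> A"
    hence "v \<in> ins u" unfolding ins_def using v by auto
    hence "mlev u \<le> lev v" using mlev_le by auto
    thus False using lt' by simp
  qed
  thus "(u,v) \<in> A" using tot2[OF v u] uv by auto
qed

lemma width_bound:
  assumes F0: "\<And>\<sigma>. Fc \<sigma> (Ps \<sigma>) \<le> F0" and q0: "\<And>c. card {v\<in>V. sc v = c} \<le> q0"
  shows "card {v\<in>V. fst (Iv v) \<le> \<alpha> \<and> \<alpha> \<le> snd (Iv v)} \<le> 2 * F0 + q0"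
proof (cases "0 < \<alpha>")
  case True
  have "{v\<in>V. fst (Iv v) \<le> \<alpha> \<and> \<alpha> \<le> snd (Iv v)} = {}" using True unfolding Iv_def by auto
  thus ?thesis by (metis card.empty zero_le)
next
  case False
  define \<sigma> where "\<sigma> = nat (- \<alpha>)"
  have sa: "int \<sigma> = - \<alpha>" unfolding \<sigma>_def using False by simp
  define P1 where "P1 = Ps (Suc \<sigma>)"
  define W where "W = {v\<in>V. fst (Iv v) \<le> \<alpha> \<and> \<alpha> \<le> snd (Iv v)}"
  have sub: "W \<subseteq> bd P1 \<union> (Up (Suc \<sigma>) - P1) \<union> (Ps \<sigma> \<inter> Dn \<sigma>) \<union> {v\<in>V. sc v = \<sigma>}"
  proof
    fix v assume "v \<in> W"
    hence v: "v \<in> V" and l1: "\<sigma> \<le> lev v" and l2: "mlev v \<le> \<sigma>" unfolding W_def Iv_def using sa by auto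
    have vP: "v \<in> Ps \<sigma>" using lev_iff[OF v] l1 by simp
    show "v \<in> bd P1 \<union> (Up (Suc \<sigma>) - P1) \<union> (Ps \<sigma> \<inter> Dn \<sigma>) \<union> {v\<in>V. sc v = \<sigma>}"
    proof (cases "lev v = \<sigma>")
      case True
      hence vP1: "v \<notin> P1" unfolding P1_def using lev_iff[OF v] by simp
      show ?thesis
      proof (cases "sc v < \<sigma>")
        case True thus ?thesis using vP v unfolding Dn_def by auto
      next
        case False
        thus ?thesis using vP1 v unfolding Up_def by (cases "sc v = \<sigma>") auto
      qed
    next
      case False
      hence "Suc \<sigma> \<le> lev v" using l1 by simp
      hence vP1: "v \<in> P1" unfolding P1_def using lev_iff[OF v] by simp
      obtain u where u: "u \<in> {v} \<union> ins v" and mu: "mlev v = lev u" using mlev_in by blast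
      have uv: "u \<noteq> v" using mu l2 False l1 by auto
      hence uin: "u \<in> ins v" using u by auto
      hence uV: "u \<in> V" and uvA: "(u,v) \<in> A" unfolding ins_def by auto
      have "u \<notin> P1" unfolding P1_def using lev_iff[OF uV] mu l2 by simp
      hence "v \<in> bd P1" unfolding bd_def using vP1 uV uvA by auto
      thus ?thesis by auto
    qed
  qed
  have fP1: "finite P1" unfolding P1_def using Ps_props(1) finV finite_subset by blast
  have f1: "finite (bd P1)" unfolding bd_def using fP1 by simp
  have f2: "finite (Up (Suc \<sigma>) - P1)" unfolding Up_def using finV by simp
  have f3: "finite (Ps \<sigma> \<inter> Dn \<sigma>)" unfolding Dn_def using finV by simp
  have f4: "finite {v\<in>V. sc v = \<sigma>}" using finV by simp
  have "card W \<le> card (bd P1 \<union> (Up (Suc \<sigma>) - P1) \<union> (Ps \<sigma> \<inter> Dn \<sigma>) \<union> {v\<in>V. sc v = \<sigma>})"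
    using f1 f2 f3 f4 by (intro card_mono[OF _ sub]) auto
  also have "\<dots> \<le> card (bd P1) + card (Up (Suc \<sigma>) - P1) + card (Ps \<sigma> \<inter> Dn \<sigma>) + card {v\<in>V. sc v = \<sigma>}"
    by (meson card_Un_le add_le_mono le_trans order_refl)
  also have "\<dots> \<le> Fc (Suc \<sigma>) P1 + Fc \<sigma> (Ps \<sigma>) + q0"
    unfolding Fc_def using q0[of \<sigma>] by linarith
  also have "\<dots> \<le> 2 * F0 + q0" using F0[of "Suc \<sigma>"] F0[of \<sigma>] unfolding P1_def by linarith
  finally show ?thesis unfolding W_def .
qed

lemma pw_bound:
  assumes F0: "\<And>\<sigma>. Fc \<sigma> (Ps \<sigma>) \<le> F0" and q0: "\<And>c. card {v\<in>V. sc v = c} \<le> q0"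
  shows "pathwidth V A \<le> 2 * F0 + q0"
  using pw_le[OF finV Iv_decomp width_bound[OF F0 q0]] .

end



lemma empty_H_copies:
  assumes sH: "simple_digraph VH AH" and e: "VH = {}"
  shows "has_k_disjoint_copies VH AH k V A"
proof -
  have "AH = {}" using sH e unfolding simple_digraph_def by auto
  thus ?thesis unfolding has_k_disjoint_copies_def top_minor_copy_def copy_verts_def using e
    by (intro exI[of _ "\<lambda>i h. undefined"] exI[of _ "\<lambda>i e. []"]) auto
qed

context tourn
begin

lemma main_bound:
  fixes VH :: "'b set" and AH :: "('b \<times> 'b) set"
  assumes sH: "simple_digraph VH AH" and k: "0 < k"
    and nc: "\<not> has_k_disjoint_copies VH AH k V A"
  shows "pathwidth V A \<le> 777 * (k * (card VH + card AH))"
proof -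
  have VHne: "VH \<noteq> {}" using empty_H_copies[OF sH, of k V A] nc by blast
  have fVH: "finite VH" using sH unfolding simple_digraph_def by auto
  have p1: "1 \<le> card VH" using VHne fVH by (simp add: Suc_le_eq card_gt_0_iff)
  define N where "N = 3 * k * (card VH + card AH)"
  have "0 < k * (card VH + card AH)" using k p1 by simp
  hence N3: "3 \<le> N" unfolding N_def by linarith
  have img: "k * card VH \<le> N" unfolding N_def by (simp add: algebra_simps)
  have nolink: False if JV: "J \<subseteq> V" and lk: "linked V A J N" and cJ: "k * card VH \<le> card J" for J
    using copies_from_linked[OF sH lk JV finV cJ] nc unfolding N_def by simp
  define g where "g = N + 2"
  define D where "D = 2 * N + 2"
  define \<beta>1 where "\<beta>1 = 5 * N + 4"
  define \<beta>2 where "\<beta>2 = 17 * N + 24"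
  have F0: "Fc \<sigma> (Ps \<sigma>) \<le> 4 * (\<beta>1 + \<beta>2)" for \<sigma>
  proof -
    have "(\<exists>Z. finite Z \<and> card Z < 2 * (\<beta>1 + \<beta>2) \<and> (\<forall>e\<in>cross \<sigma>. fst e \<in> Z \<or> snd e \<in> Z)) \<or>
         (\<exists>J. J \<subseteq> V \<and> linked V A J N \<and> k * card VH \<le> card J)"
      by (rule level[where g=g]) (use img in \<open>auto simp: g_def D_def \<beta>1_def \<beta>2_def\<close>)
    then obtain Z where Z: "finite Z" "card Z < 2 * (\<beta>1 + \<beta>2)" "\<forall>e\<in>cross \<sigma>. fst e \<in> Z \<or> snd e \<in> Z"
      using nolink by blast
    have "Fc \<sigma> (Ps \<sigma>) \<le> 2 * card Z" by (rule Fc_cover[OF Z(1) Z(3)])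
    thus ?thesis using Z(2) by linarith
  qed
  have q0: "card {v\<in>V. sc v = c} \<le> 7 * N + 3" for c
  proof (rule ccontr)
    assume "\<not> ?thesis"
    hence c: "7 * N + 4 \<le> card {v\<in>V. sc v = c}" by simp
    have "linked V A {v\<in>V. sc v = c} N" by (rule slice[OF c])
    moreover have "k * card VH \<le> card {v\<in>V. sc v = c}" using c img by linarith
    ultimately show False using nolink[of "{v\<in>V. sc v = c}"] by auto
  qed
  have "pathwidth V A \<le> 2 * (4 * (\<beta>1 + \<beta>2)) + (7 * N + 3)"
    by (rule pw_bound[OF F0 q0])
  also have "\<dots> = 183 * N + 227" unfolding \<beta>1_def \<beta>2_def by simp
  also have "\<dots> \<le> 259 * N" using N3 by linarith
  also have "\<dots> = 777 * (k * (card VH + card AH))" unfolding N_def by simp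
  finally show ?thesis .
qed

end

theorem corollary10:
  shows "\<exists>d::real. \<forall>(VH :: nat set) (AH :: (nat \<times> nat) set) (k :: nat)
            (VT :: nat set) (AT :: (nat \<times> nat) set).
     simple_digraph VH AH \<and> 0 < k \<and> tournament VT AT \<and>
     \<not> has_k_disjoint_copies VH AH k VT AT \<longrightarrow>
     real (pathwidth VT AT) \<le> d * real (card VH + card AH) * real k"
proof (rule exI[of _ 777], intro allI impI, elim conjE)
  fix VH :: "nat set" and AH :: "(nat \<times> nat) set" and k :: nat and VT :: "nat set"
    and AT :: "(nat \<times> nat) set"
  assume sH: "simple_digraph VH AH" and k: "0 < k" and T: "tournament VT AT"
    and nc: "\<not> has_k_disjoint_copies VH AH k VT AT"
  interpret tourn VT AT by (rule tourn.intro[OF T])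
  have "pathwidth VT AT \<le> 777 * (k * (card VH + card AH))" by (rule main_bound[OF sH k nc])
  hence "real (pathwidth VT AT) \<le> real (777 * (k * (card VH + card AH)))" by linarith
  thus "real (pathwidth VT AT) \<le> 777 * real (card VH + card AH) * real k"
    by (simp add: algebra_simps)
qed


end
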